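(* Let $f:\mathbb{R}^n\to\mathbb{R}$ have $L$-Lipschitz continuous gradient ($L>0$), i.e. $\|\nabla f(x)-\nabla f(y)\|\le L\|x-y\|$ for all $x,y$, and satisfy the Polyak–Łojasiewicz condition with constant $\mu>0$: $f(x)-f^*\le \frac{1}{2\mu}\|\nabla f(x)\|^2$ for all $x\in\mathbb{R}^n$, where $f^*=f(x_* )$ for a minimizer $x_*$ of $f$. Let $\Delta>0$ and suppose that at every point $x$ an inexact gradient $\widetilde{\nabla}f(x)$ is available with $\nabla f(x)=\widetilde{\nabla}f(x)+v(x)$, $\|v(x)\|\le\Delta$. Consider the gradient method $x_{k+1}=x_k-\frac{1}{L}\widetilde{\nabla}f(x_k)$ started from $x_0$, and suppose the stopping criterion $\|\widetilde{\nabla}f(x_k)\|\le\sqrt{6}\,\Delta$ is satisfied for the first time at iteration $k=N$. Then the output point $\widehat{x}=x_N$ satisfies $$f(\widehat{x})-f^*\le\frac{7\Delta^2}{\mu},$$ and the number of iterations satisfies $$N<\frac{2L}{\Delta^2}\bigl(f(x_0)-f^*\bigr).$$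
   Context: $\|\cdot\|$ is the Euclidean norm. "Satisfied for the first time at iteration $N$" means $\|\widetilde{\nabla}f(x_k)\|>\sqrt6\Delta$ for all $k=0,\dots,N-1$ and $\|\widetilde{\nabla}f(x_N)\|\le\sqrt6\Delta$. *)

theory Defs
  imports "HOL-Analysis.Analysis"
begin

end

theory Submission imports Defs begin

lemma descent:
  fixes f :: "'a::real_inner \<Rightarrow> real"
  assumes grad: "\<And>y. GDERIV f y :> g y"
    and lip: "\<And>y z. norm (g y - g z) \<le> L * norm (y - z)" and L: "L \<ge> 0"
  shows "f (x + d) \<le> f x + inner (g x) d + L / 2 * (norm d)\<^sup>2"
proof -
  define \<phi> where "\<phi> t = f (x + t *\<^sub>R d) - t * inner (g x) d - L / 2 * t\<^sup>2 * (norm d)\<^sup>2" for t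
  have hd: "((\<lambda>t. f (x + t *\<^sub>R d)) has_real_derivative inner (g (x + t *\<^sub>R d)) d) (at t)" for t
  proof -
    have 1: "((\<lambda>t. x + t *\<^sub>R d) has_derivative (\<lambda>s. s *\<^sub>R d)) (at t)"
      by (auto intro!: derivative_eq_intros)
    have 2: "(f has_derivative (\<lambda>h. inner h (g (x + t *\<^sub>R d)))) (at (x + t *\<^sub>R d))"
      using grad unfolding gderiv_def by blast
    have "((\<lambda>t. f (x + t *\<^sub>R d)) has_derivative (\<lambda>s. inner (s *\<^sub>R d) (g (x + t *\<^sub>R d)))) (at t)"
      using has_derivative_compose[OF 1 2] by (simp add: o_def)
    moreover have "(\<lambda>s. inner (s *\<^sub>R d) (g (x + t *\<^sub>R d))) = (*) (inner (g (x + t *\<^sub>R d)) d)"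
      by (auto simp: inner_commute)
    ultimately show ?thesis unfolding has_field_derivative_def by simp
  qed
  have dphi: "(\<phi> has_real_derivative (inner (g (x + t *\<^sub>R d)) d - inner (g x) d - L * t * (norm d)\<^sup>2)) (at t)" for t
    unfolding \<phi>_def
    by (rule hd derivative_eq_intros refl | simp)+
  have neg: "inner (g (x + t *\<^sub>R d)) d - inner (g x) d - L * t * (norm d)\<^sup>2 \<le> 0" if "0 \<le> t" for t
  proof -
    have "inner (g (x + t *\<^sub>R d)) d - inner (g x) d = inner (g (x + t *\<^sub>R d) - g x) d"
      by (simp add: inner_diff_left)
    also have "\<dots> \<le> norm (g (x + t *\<^sub>R d) - g x) * norm d" by (rule norm_cauchy_schwarz)
    also have "\<dots> \<le> L * norm (t *\<^sub>R d) * norm d"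
      using lip[of "x + t *\<^sub>R d" x] by (simp add: mult_right_mono)
    also have "\<dots> = L * t * (norm d)\<^sup>2" using that by (simp add: power2_eq_square)
    finally show ?thesis by simp
  qed
  have "\<phi> 1 \<le> \<phi> 0"
    by (rule DERIV_nonpos_imp_nonincreasing[of 0 1]) (use dphi neg in \<open>auto intro!: exI\<close>)
  then show ?thesis unfolding \<phi>_def by simp
qed
theorem theorem2:
  fixes f :: "real ^ 'n \<Rightarrow> real"
    and g gt :: "real ^ 'n \<Rightarrow> real ^ 'n"
    and x :: "nat \<Rightarrow> real ^ 'n"
    and xs :: "real ^ 'n"
    and L \<mu> \<Delta> :: real and N :: nat
  assumes grad: "\<And>y. GDERIV f y :> g y"
    and L_pos: "L > 0"
    and lip: "\<And>y z. norm (g y - g z) \<le> L * norm (y - z)"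
    and mu_pos: "\<mu> > 0"
    and xs_min: "\<And>y. f xs \<le> f y"
    and PL: "\<And>y. f y - f xs \<le> (1 / (2 * \<mu>)) * (norm (g y))\<^sup>2"
    and Delta_pos: "\<Delta> > 0"
    and inexact: "\<And>y. norm (g y - gt y) \<le> \<Delta>"
    and iter: "\<And>k. x (Suc k) = x k - (1 / L) *\<^sub>R gt (x k)"
    and not_stop: "\<And>k. k < N \<Longrightarrow> norm (gt (x k)) > sqrt 6 * \<Delta>"
    and stop: "norm (gt (x N)) \<le> sqrt 6 * \<Delta>"
  shows "f (x N) - f xs \<le> 7 * \<Delta>\<^sup>2 / \<mu>
         \<and> (0 < N \<longrightarrow> real N < 2 * L / \<Delta>\<^sup>2 * (f (x 0) - f xs))"
  proof -
  have s6: "sqrt 6 < 5/2" by (rule real_less_lsqrt) (auto simp: power2_eq_square)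
  have s6b: "2 < sqrt 6" by (rule real_less_rsqrt) auto
  have part1: "f (x N) - f xs \<le> 7 * \<Delta>\<^sup>2 / \<mu>"
  proof -
    have "norm (g (x N)) \<le> norm (gt (x N)) + norm (g (x N) - gt (x N))"
      by (metis add.commute diff_add_cancel norm_triangle_ineq)
    also have "\<dots> \<le> sqrt 6 * \<Delta> + \<Delta>" using stop inexact[of "x N"] by simp
    also have "\<dots> \<le> 7/2 * \<Delta>" using s6 Delta_pos by simp
    finally have "norm (g (x N)) \<le> 7/2 * \<Delta>" .
    hence "(norm (g (x N)))\<^sup>2 \<le> (7/2 * \<Delta>)\<^sup>2" by (simp add: power_mono)
    moreover have "(7/2 * \<Delta>)\<^sup>2 = 49/4 * \<Delta>\<^sup>2" by (simp add: power2_eq_square)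
    moreover have "\<Delta>\<^sup>2 \<ge> 0" by simp
    ultimately have "(norm (g (x N)))\<^sup>2 \<le> 14 * \<Delta>\<^sup>2" by linarith
    hence "(1 / (2 * \<mu>)) * (norm (g (x N)))\<^sup>2 \<le> (1 / (2 * \<mu>)) * (14 * \<Delta>\<^sup>2)"
      using mu_pos by (intro mult_left_mono) auto
    also have "\<dots> = 7 * \<Delta>\<^sup>2 / \<mu>" using mu_pos by (simp add: field_simps)
    finally show ?thesis using PL[of "x N"] by linarith
  qed
  have step: "f (x (Suc k)) < f (x k) - \<Delta>\<^sup>2 / (2 * L)" if k: "k < N" for k
  proof -
    define a where "a = gt (x k)"
    define t where "t = norm a"
    have tgt: "t > sqrt 6 * \<Delta>" using not_stop[OF k] unfolding t_def a_def .
    have d: "f (x (Suc k)) \<le> f (x k) + inner (g (x k)) (- (1/L) *\<^sub>R a) + L / 2 * (norm (- (1/L) *\<^sub>R a))\<^sup>2"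
      using descent[OF grad lip, of "x k" "- (1/L) *\<^sub>R a"] L_pos iter[of k] unfolding a_def by simp
    have n: "(norm (- (1/L) *\<^sub>R a))\<^sup>2 = t\<^sup>2 / L\<^sup>2" using L_pos
      by (simp add: t_def power_divide)
    have "inner (g (x k)) a = inner a a + inner (g (x k) - a) a" by (simp add: inner_diff_left)
    moreover have "inner (g (x k) - a) a \<ge> - (\<Delta> * t)"
    proof -
      have "\<bar>inner (g (x k) - a) a\<bar> \<le> norm (g (x k) - a) * t" unfolding t_def by (rule Cauchy_Schwarz_ineq2)
      also have "\<dots> \<le> \<Delta> * t" using inexact[of "x k"] unfolding a_def t_def by (simp add: mult_right_mono)
      finally show ?thesis by linarith
    qed
    moreover have "inner a a = t\<^sup>2" by (simp add: t_def power2_norm_eq_inner)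
    ultimately have ga: "inner (g (x k)) a \<ge> t\<^sup>2 - \<Delta> * t" by linarith
    have eq: "inner (g (x k)) (- (1/L) *\<^sub>R a) + L / 2 * (norm (- (1/L) *\<^sub>R a))\<^sup>2
        = (- inner (g (x k)) a + t\<^sup>2 / 2) / L" using L_pos unfolding n
      by (simp add: field_simps power2_eq_square)
    have key: "t\<^sup>2 - 2 * \<Delta> * t - \<Delta>\<^sup>2 > 0"
    proof -
      have "t - \<Delta> > (sqrt 6 - 1) * \<Delta>" using tgt by (simp add: algebra_simps)
      moreover have "(sqrt 6 - 1) * \<Delta> > 0" using s6b Delta_pos by simp
      ultimately have "(t - \<Delta>)\<^sup>2 > ((sqrt 6 - 1) * \<Delta>)\<^sup>2"
        by (intro power_strict_mono) auto
      moreover have "((sqrt 6 - 1) * \<Delta>)\<^sup>2 = (7 - 2 * sqrt 6) * \<Delta>\<^sup>2"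
        by (simp add: power_mult_distrib power2_eq_square algebra_simps)
      moreover have "(7 - 2 * sqrt 6) * \<Delta>\<^sup>2 \<ge> 2 * \<Delta>\<^sup>2" using s6 by (intro mult_right_mono) auto
      ultimately show ?thesis by (simp add: power2_eq_square algebra_simps)
    qed
    have "(- inner (g (x k)) a + t\<^sup>2 / 2) / L \<le> (- t\<^sup>2 / 2 + \<Delta> * t) / L"
      using ga L_pos by (intro divide_right_mono) auto
    also have "\<dots> < (- \<Delta>\<^sup>2 / 2) / L" using key L_pos by (intro divide_strict_right_mono) auto
    finally show ?thesis using d eq by (simp add: field_simps)
  qed
  have acc: "k \<le> N \<Longrightarrow> f (x k) \<le> f (x 0) - real k * (\<Delta>\<^sup>2 / (2 * L))" for k
  proof (induction k)
    case (Suc k)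
    have gen: "\<And>c. real (Suc k) * c = real k * c + c" by (simp add: algebra_simps)
    have "k < N" "k \<le> N" using Suc.prems by auto
    then show ?case using step[of k] Suc.IH gen[of "\<Delta>\<^sup>2 / (2 * L)"] by linarith
  qed simp
  have part2: "real N < 2 * L / \<Delta>\<^sup>2 * (f (x 0) - f xs)" if N0: "0 < N"
  proof -
    obtain m where m: "N = Suc m" using N0 by (cases N) auto
    have "f (x N) < f (x 0) - real N * (\<Delta>\<^sup>2 / (2 * L))"
    proof -
      have gen: "\<And>c. real (Suc m) * c = real m * c + c" by (simp add: algebra_simps)
      have mN: "m < N" "m \<le> N" using m by auto
      have "f (x (Suc m)) < f (x 0) - real (Suc m) * (\<Delta>\<^sup>2 / (2 * L))"
        using step[OF mN(1)] acc[OF mN(2)] gen[of "\<Delta>\<^sup>2 / (2 * L)"] by linarith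
      then show ?thesis unfolding m .
    qed
    hence "real N * (\<Delta>\<^sup>2 / (2 * L)) < f (x 0) - f xs" using xs_min[of "x N"] by linarith
    hence "real N * (\<Delta>\<^sup>2 / (2 * L)) * (2 * L / \<Delta>\<^sup>2) < (f (x 0) - f xs) * (2 * L / \<Delta>\<^sup>2)"
      using L_pos Delta_pos by (intro mult_strict_right_mono) auto
    moreover have "real N * (\<Delta>\<^sup>2 / (2 * L)) * (2 * L / \<Delta>\<^sup>2) = real N"
      using L_pos Delta_pos by simp
    ultimately show ?thesis by (simp add: mult.commute)
  qed
  show ?thesis using part1 part2 by blast
qed

end
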